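(* Let $\lambda\in(0,1)$ and let $G$ be a finite simple connected graph with $n\ge 2$ vertices. Then $$Mt^{e}_{\lambda}(G)\;\le\;\max_{1\le D\le n-1}\left[\frac{\lambda\left[1-(D+1)\lambda^{D}+D\lambda^{D+1}\right]}{(\lambda-1)^2}+(n-D-1)D\lambda^{D}\right].$$ Moreover, equality holds for a broom on $n$ vertices, the maximum of $t^e_\lambda$ over its vertices being attained at its starting vertex.
   Context: $d(u,v)$ denotes graph distance. For a vertex $u$ of $G=(V,E)$, $t^{e}_{\lambda}(u)=\sum_{v\in V\setminus\{u\}} d(u,v)\lambda^{d(u,v)}$, and $Mt^{e}_{\lambda}(G)=\max\{t^{e}_{\lambda}(u):u\in V\}$. A broom on $n$ vertices (with parameter $D$, $1\le D\le n-1$) is the graph consisting of a path $u=v_0v_1\cdots v_D$ together with $n-D-1$ further vertices, each adjacent only to $v_{D-1}$; the vertex $u=v_0$ is called its starting vertex. *)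

theory Defs
  imports Complex_Main
begin

definition simple_graph :: "'a set \<Rightarrow> ('a \<Rightarrow> 'a \<Rightarrow> bool) \<Rightarrow> bool" where
  "simple_graph V E \<longleftrightarrow> finite V \<and> (\<forall>u v. E u v \<longrightarrow> E v u)
     \<and> (\<forall>u. \<not> E u u) \<and> (\<forall>u v. E u v \<longrightarrow> u \<in> V \<and> v \<in> V)"

definition is_walk :: "('a \<Rightarrow> 'a \<Rightarrow> bool) \<Rightarrow> 'a \<Rightarrow> 'a \<Rightarrow> nat \<Rightarrow> bool" where
  "is_walk E u v k \<longleftrightarrow> (\<exists>xs. length xs = Suc k \<and> xs ! 0 = u \<and> xs ! k = v
      \<and> (\<forall>i<k. E (xs ! i) (xs ! Suc i)))"

definition connected_graph :: "'a set \<Rightarrow> ('a \<Rightarrow> 'a \<Rightarrow> bool) \<Rightarrow> bool" where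
  "connected_graph V E \<longleftrightarrow> (\<forall>u\<in>V. \<forall>v\<in>V. \<exists>k. is_walk E u v k)"

definition gdist :: "('a \<Rightarrow> 'a \<Rightarrow> bool) \<Rightarrow> 'a \<Rightarrow> 'a \<Rightarrow> nat" where
  "gdist E u v = (LEAST k. is_walk E u v k)"

definition te :: "real \<Rightarrow> 'a set \<Rightarrow> ('a \<Rightarrow> 'a \<Rightarrow> bool) \<Rightarrow> 'a \<Rightarrow> real" where
  "te lam V E u = (\<Sum>v\<in>V - {u}. real (gdist E u v) * lam ^ gdist E u v)"

definition Mte :: "real \<Rightarrow> 'a set \<Rightarrow> ('a \<Rightarrow> 'a \<Rightarrow> bool) \<Rightarrow> real" where
  "Mte lam V E = Max (te lam V E ` V)"

definition broom_bound :: "real \<Rightarrow> nat \<Rightarrow> nat \<Rightarrow> real" where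
  "broom_bound lam n D =
     lam * (1 - real (D + 1) * lam ^ D + real D * lam ^ (D + 1)) / (lam - 1)\<^sup>2
     + real (n - D - 1) * real D * lam ^ D"

text \<open>The broom on vertices {0..<n}: path 0 - 1 - ... - D, and vertices D+1,...,n-1
  each adjacent only to D-1. Starting vertex is 0.\<close>
definition broom_adj :: "nat \<Rightarrow> nat \<Rightarrow> nat \<Rightarrow> nat \<Rightarrow> bool" where
  "broom_adj n D i j \<longleftrightarrow> i < n \<and> j < n \<and>
     ((i \<le> D \<and> j \<le> D \<and> (Suc i = j \<or> Suc j = i))
      \<or> (D < i \<and> j = D - 1) \<or> (D < j \<and> i = D - 1))"

end

theory Submission imports Defs begin

lemma walk_fun: "is_walk E u v k \<longleftrightarrow> (\<exists>p. p 0 = u \<and> p k = v \<and> (\<forall>i<k. E (p i) (p (Suc i))))"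
proof
  assume "is_walk E u v k"
  then obtain xs where "length xs = Suc k" "xs ! 0 = u" "xs ! k = v" "\<forall>i<k. E (xs ! i) (xs ! Suc i)"
    unfolding is_walk_def by blast
  then show "\<exists>p. p 0 = u \<and> p k = v \<and> (\<forall>i<k. E (p i) (p (Suc i)))" by (intro exI[of _ "(!) xs"]) auto
next
  assume "\<exists>p. p 0 = u \<and> p k = v \<and> (\<forall>i<k. E (p i) (p (Suc i)))"
  then obtain p where p: "p 0 = u" "p k = v" "\<forall>i<k. E (p i) (p (Suc i))" by blast
  show "is_walk E u v k" unfolding is_walk_def
    apply (rule exI[of _ "map p [0..<Suc k]"])
    using p by (auto simp: nth_map simp del: upt_Suc)
qed

lemma walk_trans: "is_walk E u v a \<Longrightarrow> is_walk E v w b \<Longrightarrow> is_walk E u w (a+b)"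
proof -
  assume "is_walk E u v a" "is_walk E v w b"
  then obtain p q where p: "p 0 = u" "p a = v" "\<forall>i<a. E (p i) (p (Suc i))"
    and q: "q 0 = v" "q b = w" "\<forall>i<b. E (q i) (q (Suc i))" unfolding walk_fun by blast
  define r where "r i = (if i \<le> a then p i else q (i - a))" for i
  have "\<forall>i<a+b. E (r i) (r (Suc i))"
  proof (intro allI impI)
    fix i assume "i < a+b"
    show "E (r i) (r (Suc i))"
    proof (cases "i < a")
      case True then show ?thesis using p by (auto simp: r_def)
    next
      case False
      then have "Suc i - a = Suc (i - a)" by auto
      then show ?thesis using False q p \<open>i < a+b\<close> by (auto simp: r_def)
    qed
  qed
  moreover have "r 0 = u" "r (a+b) = w" using p q by (auto simp: r_def)
  ultimately show ?thesis unfolding walk_fun by blast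
qed

lemma walk_take: "is_walk E u v k \<Longrightarrow> p 0 = u \<Longrightarrow> (\<forall>i<k. E (p i) (p (Suc i))) \<Longrightarrow> j \<le> k \<Longrightarrow> is_walk E u (p j) j"
  unfolding walk_fun by auto

lemma walk_drop: "(\<forall>i<k. E (p i) (p (Suc i))) \<Longrightarrow> j \<le> k \<Longrightarrow> is_walk E (p j) (p k) (k - j)"
  unfolding walk_fun by (rule exI[of _ "\<lambda>i. p (i + j)"]) auto

lemma gdist_le: "is_walk E u v k \<Longrightarrow> gdist E u v \<le> k"
  unfolding gdist_def by (rule Least_le)

lemma gdist_walk: "is_walk E u v k \<Longrightarrow> is_walk E u v (gdist E u v)"
  unfolding gdist_def by (rule LeastI)

lemma gdist_tri: "is_walk E u v a \<Longrightarrow> is_walk E v w b \<Longrightarrow> gdist E u w \<le> gdist E u v + gdist E v w"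
  by (rule gdist_le, rule walk_trans, erule gdist_walk, erule gdist_walk)

lemma gdist_self: "gdist E u u = 0"
proof -
  have "is_walk E u u 0" unfolding walk_fun by auto
  then show ?thesis using gdist_le by fastforce
qed

lemma gdist_pos: "is_walk E u v k \<Longrightarrow> u \<noteq> v \<Longrightarrow> 0 < gdist E u v"
proof (rule ccontr)
  assume "is_walk E u v k" "u \<noteq> v" "\<not> 0 < gdist E u v"
  then have "is_walk E u v 0" using gdist_walk by fastforce
  then show False using \<open>u \<noteq> v\<close> unfolding walk_fun by auto
qed

lemma sum_closed: "(lam::real) \<noteq> 1 \<Longrightarrow> (\<Sum>k=1..j. real k * lam^k) = lam * (1 - real (j + 1) * lam ^ j + real j * lam ^ (j + 1)) / (lam - 1)\<^sup>2"
proof -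
  assume "lam \<noteq> 1"
  then have ne: "(lam - 1)^2 \<noteq> 0" by simp
  have "(lam-1)^2 * (\<Sum>k=1..j. real k * lam^k) = lam * (1 - real (j + 1) * lam ^ j + real j * lam ^ (j + 1))"
  proof (induction j)
    case 0 then show ?case by simp
  next
    case (Suc j)
    have "(lam-1)^2 * (\<Sum>k=1..Suc j. real k * lam^k) = (lam-1)^2 * (\<Sum>k=1..j. real k * lam^k) + (lam-1)^2 * (real (Suc j) * lam^Suc j)"
      by (simp add: distrib_left)
    also have "\<dots> = lam * (1 - real (j + 1) * lam ^ j + real j * lam ^ (j + 1)) + (lam-1)^2 * (real (Suc j) * lam^Suc j)"
      using Suc by simp
    also have "\<dots> = lam * (1 - real (Suc j + 1) * lam ^ Suc j + real (Suc j) * lam ^ (Suc j + 1))"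
      by (simp add: algebra_simps power2_eq_square)
    finally show ?case .
  qed
  then show ?thesis using ne by (simp add: field_simps)
qed

lemma te_bound:
  assumes lam: "0 < lam" "lam < 1" and sg: "simple_graph V E" and cg: "connected_graph V E"
    and u: "u \<in> V" and n: "card V \<ge> 2"
  shows "\<exists>j. 1 \<le> j \<and> j \<le> card V - 1 \<and> te lam V E u \<le> broom_bound lam (card V) j"
proof -
  define f where "f k = real k * lam ^ k" for k :: nat
  define S where "S = V - {u}"
  have fin: "finite V" using sg unfolding simple_graph_def by blast
  have finS: "finite S" using fin S_def by simp
  have cardS: "card S = card V - 1" using u fin S_def by simp
  have Sne: "S \<noteq> {}" using cardS n by auto
  have wk: "\<And>v. v \<in> V \<Longrightarrow> \<exists>k. is_walk E u v k" using cg u unfolding connected_graph_def by blast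
  have dpos: "\<And>v. v \<in> S \<Longrightarrow> 1 \<le> gdist E u v"
  proof -
    fix v assume "v \<in> S"
    then obtain k where "is_walk E u v k" "u \<noteq> v" using wk S_def by auto
    then show "1 \<le> gdist E u v" using gdist_pos by fastforce
  qed
  define e where "e = Max (gdist E u ` S)"
  have "e \<in> gdist E u ` S" unfolding e_def using finS Sne by (intro Max_in) auto
  then obtain v0 where v0: "v0 \<in> S" "gdist E u v0 = e" by auto
  have dle: "\<And>v. v \<in> S \<Longrightarrow> gdist E u v \<le> e" unfolding e_def using finS by simp
  have e1: "1 \<le> e" using dpos v0 by fastforce
  obtain k0 where "is_walk E u v0 k0" using wk v0 S_def by auto
  then have "is_walk E u v0 e" using gdist_walk v0 by fastforce
  then obtain p where p: "p 0 = u" "p e = v0" "\<forall>i<e. E (p i) (p (Suc i))" unfolding walk_fun by blast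
  have dist_p: "gdist E u (p i) = i" if "i \<le> e" for i
  proof -
    have w1: "is_walk E u (p i) i" unfolding walk_fun using p that by (intro exI[of _ p]) auto
    then have a: "gdist E u (p i) \<le> i" by (rule gdist_le)
    have w2: "is_walk E (p i) v0 (e - i)" using walk_drop[of e E p i] p that by simp
    have "e \<le> gdist E u (p i) + gdist E (p i) v0" using gdist_tri[OF w1 w2] v0 by simp
    moreover have "gdist E (p i) v0 \<le> e - i" using gdist_le[OF w2] .
    ultimately show ?thesis using a that by linarith
  qed
  have pS: "p i \<in> S" if "1 \<le> i" "i \<le> e" for i
  proof -
    have "i - 1 < e" using that by simp
    then have "E (p (i - 1)) (p (Suc (i - 1)))" using p(3) by blast
    moreover have "Suc (i - 1) = i" using that by simp
    ultimately have "E (p (i - 1)) (p i)" by simp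
    then have "p i \<in> V" using sg unfolding simple_graph_def by blast
    moreover have "p i \<noteq> u" using dist_p[OF that(2)] that gdist_self[of E u] by auto
    ultimately show ?thesis unfolding S_def by auto
  qed
  have "Max (f ` {1..e}) \<in> f ` {1..e}" using e1 by (intro Max_in) auto
  then obtain j where j: "j \<in> {1..e}" "f j = Max (f ` {1..e})" by auto
  have fj: "\<And>k. k \<in> {1..e} \<Longrightarrow> f k \<le> f j" using j by simp
  define W where "W = p ` {1..j}"
  have injp: "inj_on p {1..j}"
  proof (rule inj_onI)
    fix a b assume "a \<in> {1..j}" "b \<in> {1..j}" "p a = p b"
    then show "a = b" using dist_p j by (metis atLeastAtMost_iff order_trans)
  qed
  have WS: "W \<subseteq> S" unfolding W_def using pS j by auto
  have cardW: "card W = j" unfolding W_def using injp by (simp add: card_image)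
  have jn: "j \<le> card V - 1" using card_mono[OF finS WS] cardW cardS by simp
  have te_eq: "te lam V E u = (\<Sum>v\<in>S. f (gdist E u v))" unfolding te_def f_def S_def by simp
  also have "\<dots> = (\<Sum>v\<in>W. f (gdist E u v)) + (\<Sum>v\<in>S - W. f (gdist E u v))"
    using sum.subset_diff[OF WS finS] by (simp add: add.commute)
  also have "(\<Sum>v\<in>W. f (gdist E u v)) = (\<Sum>k=1..j. f k)"
    unfolding W_def using sum.reindex[OF injp, of "\<lambda>v. f (gdist E u v)"] dist_p j
    by (auto intro!: sum.cong)
  also have "(\<Sum>v\<in>S - W. f (gdist E u v)) \<le> (\<Sum>v\<in>S - W. f j)"
    by (rule sum_mono) (use fj dpos dle in auto)
  also have "(\<Sum>v\<in>S - W. f j) = real (card V - j - 1) * f j"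
    using card_Diff_subset[OF finite_subset[OF WS finS] WS] cardW cardS by simp
  finally have "te lam V E u \<le> (\<Sum>k=1..j. f k) + real (card V - j - 1) * f j" by simp
  moreover have "broom_bound lam (card V) j = (\<Sum>k=1..j. f k) + real (card V - j - 1) * f j"
    unfolding broom_bound_def f_def using sum_closed[of lam j] lam by simp
  ultimately show ?thesis using j jn by auto
qed


lemma Mte_bound:
  assumes lam: "0 < lam" "lam < 1" and sg: "simple_graph V E" and cg: "connected_graph V E"
    and n: "card V \<ge> 2"
  shows "Mte lam V E \<le> Max (broom_bound lam (card V) ` {1..card V - 1})"
proof -
  have fin: "finite V" using sg unfolding simple_graph_def by blast
  have Vne: "V \<noteq> {}" using n by auto
  show ?thesis unfolding Mte_def
  proof (subst Max_le_iff)
    show "finite (te lam V E ` V)" using fin by simp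
    show "te lam V E ` V \<noteq> {}" using Vne by simp
    show "\<forall>a\<in>te lam V E ` V. a \<le> Max (broom_bound lam (card V) ` {1..card V - 1})"
    proof
      fix a assume "a \<in> te lam V E ` V"
      then obtain u where u: "u \<in> V" "a = te lam V E u" by auto
      obtain j where j: "1 \<le> j" "j \<le> card V - 1" "te lam V E u \<le> broom_bound lam (card V) j"
        using te_bound[OF lam sg cg u(1) n] by blast
      have "broom_bound lam (card V) j \<le> Max (broom_bound lam (card V) ` {1..card V - 1})"
        using j by (intro Max_ge) auto
      then show "a \<le> Max (broom_bound lam (card V) ` {1..card V - 1})" using u j by linarith
    qed
  qed
qed

lemma walk_rev:
  assumes sym: "\<forall>a b. E a b \<longrightarrow> E b a" and w: "is_walk E u v k"
  shows "is_walk E v u k"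
proof -
  obtain p where p: "p 0 = u" "p k = v" "\<forall>i<k. E (p i) (p (Suc i))" using w unfolding walk_fun by blast
  have "\<forall>i<k. E (p (k - i)) (p (k - Suc i))"
  proof (intro allI impI)
    fix i assume "i < k"
    then have "E (p (k - Suc i)) (p (Suc (k - Suc i)))" using p(3) by simp
    moreover have "Suc (k - Suc i) = k - i" using \<open>i < k\<close> by simp
    ultimately show "E (p (k - i)) (p (k - Suc i))" using sym by simp
  qed
  then show ?thesis unfolding walk_fun using p by (intro exI[of _ "\<lambda>i. p (k - i)"]) auto
qed

definition bh :: "nat \<Rightarrow> nat \<Rightarrow> nat" where "bh D i = (if i \<le> D then i else D)"

lemma broom_simple: "simple_graph {0..<n} (broom_adj n D)"
  unfolding simple_graph_def broom_adj_def by auto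

lemma broom_walk:
  assumes D: "1 \<le> D" "D < n" and v: "v < n"
  shows "is_walk (broom_adj n D) 0 v (bh D v)"
proof (cases "v \<le> D")
  case True
  then show ?thesis unfolding walk_fun bh_def broom_adj_def using v
    by (intro exI[of _ "\<lambda>i. i"]) auto
next
  case False
  have "\<forall>i<D. broom_adj n D (if i < D then i else v) (if Suc i < D then Suc i else v)"
    unfolding broom_adj_def using False D v by auto
  then show ?thesis unfolding walk_fun bh_def using False D
    by (intro exI[of _ "\<lambda>i. if i < D then i else v"]) auto
qed

lemma broom_step: "1 \<le> D \<Longrightarrow> broom_adj n D a b \<Longrightarrow> bh D b \<le> Suc (bh D a)"
  unfolding broom_adj_def bh_def by auto

lemma broom_lower:
  assumes D: "1 \<le> D" and w: "is_walk (broom_adj n D) 0 v k"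
  shows "bh D v \<le> k"
proof -
  obtain p where p: "p 0 = 0" "p k = v" "\<forall>i<k. broom_adj n D (p i) (p (Suc i))" using w unfolding walk_fun by blast
  have "i \<le> k \<Longrightarrow> bh D (p i) \<le> i" for i
  proof (induction i)
    case 0 then show ?case using p by (simp add: bh_def)
  next
    case (Suc i)
    then have "i < k" by simp
    then have "broom_adj n D (p i) (p (Suc i))" using p(3) by blast
    then have "bh D (p (Suc i)) \<le> Suc (bh D (p i))" using broom_step[OF D] by blast
    then show ?case using Suc by simp
  qed
  then show ?thesis using p by fastforce
qed

lemma broom_gdist:
  assumes D: "1 \<le> D" "D < n" and v: "v < n"
  shows "gdist (broom_adj n D) 0 v = bh D v"
  using gdist_le[OF broom_walk[OF D v]] broom_lower[OF D(1) gdist_walk[OF broom_walk[OF D v]]] by simp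

lemma broom_connected:
  assumes D: "1 \<le> D" "D < n"
  shows "connected_graph {0..<n} (broom_adj n D)"
  unfolding connected_graph_def
proof (intro ballI)
  fix a b assume "a \<in> {0..<n}" "b \<in> {0..<n}"
  then have "is_walk (broom_adj n D) a 0 (bh D a)" "is_walk (broom_adj n D) 0 b (bh D b)"
    using broom_walk[OF D] walk_rev[of "broom_adj n D"] by (auto simp: broom_adj_def)
  then show "\<exists>k. is_walk (broom_adj n D) a b k" by (blast intro: walk_trans)
qed

lemma broom_te:
  assumes D: "1 \<le> D" "D < n" and lam: "lam \<noteq> 1"
  shows "te lam {0..<n} (broom_adj n D) 0 = broom_bound lam n D"
proof -
  have "te lam {0..<n} (broom_adj n D) 0 = (\<Sum>v\<in>{1..<n}. real (bh D v) * lam ^ bh D v)"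
    unfolding te_def using broom_gdist[OF D]
    by (intro sum.cong) auto
  also have "{1..<n} = {1..D} \<union> {D+1..<n}" using D by auto
  also have "(\<Sum>v\<in>{1..D} \<union> {D+1..<n}. real (bh D v) * lam ^ bh D v)
     = (\<Sum>v\<in>{1..D}. real (bh D v) * lam ^ bh D v) + (\<Sum>v\<in>{D+1..<n}. real (bh D v) * lam ^ bh D v)"
    by (rule sum.union_disjoint) auto
  also have "(\<Sum>v\<in>{1..D}. real (bh D v) * lam ^ bh D v) = (\<Sum>v=1..D. real v * lam ^ v)"
    by (rule sum.cong) (auto simp: bh_def)
  also have "(\<Sum>v\<in>{D+1..<n}. real (bh D v) * lam ^ bh D v) = (\<Sum>v\<in>{D+1..<n}. real D * lam ^ D)"
    by (rule sum.cong) (auto simp: bh_def)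
  also have "\<dots> = real (n - D - 1) * real D * lam ^ D" by simp
  finally show ?thesis unfolding broom_bound_def using sum_closed[OF lam, of D] by simp
qed

theorem theorem5:
  fixes lam :: real and V :: "'a set" and E :: "'a \<Rightarrow> 'a \<Rightarrow> bool"
  assumes "0 < lam" "lam < 1"
    and "simple_graph V E" "connected_graph V E" "card V \<ge> 2"
  shows "Mte lam V E \<le> Max (broom_bound lam (card V) ` {1..card V - 1})
    \<and> (\<exists>D. 1 \<le> D \<and> D \<le> card V - 1
         \<and> Mte lam {0..<card V} (broom_adj (card V) D)
             = Max (broom_bound lam (card V) ` {1..card V - 1})
         \<and> te lam {0..<card V} (broom_adj (card V) D) 0
             = Mte lam {0..<card V} (broom_adj (card V) D))"
proof
  show "Mte lam V E \<le> Max (broom_bound lam (card V) ` {1..card V - 1})"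
    using Mte_bound assms by blast
  define n where "n = card V"
  have n2: "n \<ge> 2" using assms n_def by simp
  have "Max (broom_bound lam n ` {1..n - 1}) \<in> broom_bound lam n ` {1..n - 1}"
    using n2 by (intro Max_in) auto
  then obtain D where D: "D \<in> {1..n-1}" "broom_bound lam n D = Max (broom_bound lam n ` {1..n - 1})" by auto
  have D1: "1 \<le> D" "D < n" using D n2 by auto
  have te0: "te lam {0..<n} (broom_adj n D) 0 = Max (broom_bound lam n ` {1..n - 1})"
    using broom_te[OF D1] assms D by simp
  have up: "Mte lam {0..<n} (broom_adj n D) \<le> Max (broom_bound lam n ` {1..n - 1})"
    using Mte_bound[OF assms(1,2) broom_simple broom_connected[OF D1]] n2 by simp
  have lo: "te lam {0..<n} (broom_adj n D) 0 \<le> Mte lam {0..<n} (broom_adj n D)"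
    unfolding Mte_def using n2 by (intro Max_ge) auto
  show "\<exists>D. 1 \<le> D \<and> D \<le> card V - 1
         \<and> Mte lam {0..<card V} (broom_adj (card V) D)
             = Max (broom_bound lam (card V) ` {1..card V - 1})
         \<and> te lam {0..<card V} (broom_adj (card V) D) 0
             = Mte lam {0..<card V} (broom_adj (card V) D)"
    using D1 te0 up lo unfolding n_def[symmetric] by (intro exI[of _ D]) (auto intro: order.antisym)
qed

end
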